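(* Let $\mathcal{F}$ be a vector space over a field $K$, let $T \colon \mathcal{F} \to \mathcal{F}$ be a surjective linear map, let $\mathcal{B} \leq \mathcal{F}^*$ be a finite-dimensional subspace of the dual space, and let $\mathcal{E} \leq \mathcal{F}$ be a subspace. Let $G \colon \mathcal{F} \to \mathcal{F}$ be any linear right inverse of $T$ (i.e. $TG = 1$). Then $$T(\mathcal{B}^{\perp})^{\perp} = G^*\bigl(\mathcal{B} \cap (\operatorname{Ker} T)^{\perp}\bigr).$$ Moreover, $\dim T(\mathcal{B}^{\perp})^{\perp} = \dim \mathcal{E}'$ for every subspace $\mathcal{E}' \leq \mathcal{F}$ with $\mathcal{F} = T(\mathcal{B}^{\perp}) \dotplus \mathcal{E}'$ (direct sum).
   Context: $\mathcal{F}^*$ denotes the algebraic dual of $\mathcal{F}$. For $U \leq \mathcal{F}$, $U^{\perp} = \{\beta \in \mathcal{F}^* : \beta(u) = 0 \text{ for all } u \in U\}$; for $\mathcal{B} \leq \mathcal{F}^*$, $\mathcal{B}^{\perp} = \{v \in \mathcal{F} : \beta(v) = 0 \text{ for all } \beta \in \mathcal{B}\}$. For a linear map $S\colon \mathcal{F} \to \mathcal{F}$, the transpose $S^* \colon \mathcal{F}^* \to \mathcal{F}^*$ is $\gamma \mapsto \gamma \circ S$. The triple $(T, \mathcal{B}, \mathcal{E})$ is called a generalized boundary problem. *)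

theory Defs
  imports Complex_Main "HOL-Library.Function_Algebras"
begin

definition dual_scale :: "'k::field \<Rightarrow> ('v \<Rightarrow> 'k) \<Rightarrow> ('v \<Rightarrow> 'k)" where
  "dual_scale c f = (\<lambda>x. c * f x)"

definition algdual :: "('k::field \<Rightarrow> 'v::ab_group_add \<Rightarrow> 'v) \<Rightarrow> ('v \<Rightarrow> 'k) set" where
  "algdual scale = {f. Vector_Spaces.linear scale (*) f}"

definition annih :: "('k::field \<Rightarrow> 'v::ab_group_add \<Rightarrow> 'v) \<Rightarrow> 'v set \<Rightarrow> ('v \<Rightarrow> 'k) set" where
  "annih scale U = {\<beta> \<in> algdual scale. \<forall>u\<in>U. \<beta> u = 0}"

definition preannih :: "('v \<Rightarrow> 'k::zero) set \<Rightarrow> 'v set" where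
  "preannih Bs = {v. \<forall>\<beta>\<in>Bs. \<beta> v = 0}"

definition fin_dim :: "('k::field \<Rightarrow> 'b::ab_group_add \<Rightarrow> 'b) \<Rightarrow> 'b set \<Rightarrow> bool" where
  "fin_dim s V \<longleftrightarrow> (\<exists>S. finite S \<and> module.span s S = V)"

end

theory Submission
  imports Defs
begin

lemma vs_self: "vector_space ((*)::'k::field\<Rightarrow>'k\<Rightarrow>'k)"
  by unfold_locales (auto simp: algebra_simps)

lemma vs_dual: "vector_space (dual_scale :: 'k::field \<Rightarrow> ('v\<Rightarrow>'k) \<Rightarrow> ('v\<Rightarrow>'k))"
  by unfold_locales (auto simp: dual_scale_def fun_eq_iff algebra_simps)

lemma dual_scale_app: "dual_scale c f x = c * f x"
  by (simp add: dual_scale_def)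

lemma sum_fun_app: "(\<Sum>i\<in>A. f i) x = (\<Sum>i\<in>A. f i x)"
  by (induction A rule: infinite_finite_induct) auto

lemma lin_add: "Vector_Spaces.linear s1 s2 f \<Longrightarrow> f (x + y) = f x + f y"
  by (simp add: Vector_Spaces.linear_iff)
lemma lin_scale: "Vector_Spaces.linear s1 s2 f \<Longrightarrow> f (s1 c x) = s2 c (f x)"
  by (simp add: Vector_Spaces.linear_iff)
lemma lin_diff: assumes "Vector_Spaces.linear s1 s2 f" shows "f (x - y) = f x - f y"
proof - interpret Vector_Spaces.linear s1 s2 f by fact show ?thesis by (rule diff) qed
lemma lin_zero: assumes "Vector_Spaces.linear s1 s2 f" shows "f 0 = 0"
proof - interpret Vector_Spaces.linear s1 s2 f by fact show ?thesis by (rule zero) qed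

lemma key:
  fixes scale :: "'k::field \<Rightarrow> 'v::ab_group_add \<Rightarrow> 'v" and S :: "('v \<Rightarrow> 'k) set"
  assumes VS: "vector_space scale" and fin: "finite S"
  shows "S \<subseteq> algdual scale \<Longrightarrow> f \<in> algdual scale \<Longrightarrow> (\<forall>v. (\<forall>b\<in>S. b v = 0) \<longrightarrow> f v = 0)
     \<Longrightarrow> f \<in> module.span dual_scale S"
  using fin
proof (induction S arbitrary: f rule: finite_induct)
  interpret D: vector_space "dual_scale :: 'k \<Rightarrow> ('v \<Rightarrow> 'k) \<Rightarrow> _" by (rule vs_dual)
  case empty
  then have "f = 0" by auto
  then show ?case using D.span_zero by metis
next
  interpret D: vector_space "dual_scale :: 'k \<Rightarrow> ('v \<Rightarrow> 'k) \<Rightarrow> _" by (rule vs_dual)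
  interpret V: vector_space scale by (rule VS)
  case (insert b S)
  have bl: "Vector_Spaces.linear scale (*) b" using insert.prems by (auto simp: algdual_def)
  have Sl: "\<And>b'. b' \<in> S \<Longrightarrow> Vector_Spaces.linear scale (*) b'" using insert.prems by (auto simp: algdual_def)
  have fl: "Vector_Spaces.linear scale (*) f" using insert.prems by (auto simp: algdual_def)
  show ?case
  proof (cases "\<forall>v. (\<forall>b'\<in>S. b' v = 0) \<longrightarrow> b v = 0")
    case True
    have "f \<in> D.span S" by (rule insert.IH) (use insert.prems True in auto)
    then show ?thesis using D.span_mono[of S "insert b S"] by auto
  next
    case False
    then obtain w where w: "\<forall>b'\<in>S. b' w = 0" "b w \<noteq> 0" by auto
    define w' where "w' = scale (inverse (b w)) w"
    have w'1: "b w' = 1" using w by (simp add: w'_def lin_scale[OF bl])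
    have w'0: "\<forall>b'\<in>S. b' w' = 0" using w by (simp add: w'_def lin_scale[OF Sl])
    define f' where "f' = f - dual_scale (f w') b"
    have f'l: "f' \<in> algdual scale"
      unfolding algdual_def f'_def using fl bl vs_self VS
      by (auto simp: Vector_Spaces.linear_iff algebra_simps dual_scale_app)
    have "\<forall>v. (\<forall>b'\<in>S. b' v = 0) \<longrightarrow> f' v = 0"
    proof (intro allI impI)
      fix v assume v: "\<forall>b'\<in>S. b' v = 0"
      define u where "u = v - scale (b v) w'"
      have "\<forall>b'\<in>insert b S. b' u = 0"
        using v w'0 w'1 by (auto simp: u_def dual_scale_app lin_diff[OF bl] lin_scale[OF bl] lin_diff[OF Sl] lin_scale[OF Sl])
      then have "f u = 0" using insert.prems by auto
      then show "f' v = 0" by (simp add: dual_scale_app u_def f'_def lin_diff[OF fl] lin_scale[OF fl] algebra_simps)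
    qed
    then have "f' \<in> D.span S" by (intro insert.IH) (use insert.prems f'l in auto)
    then have "f' \<in> D.span (insert b S)" using D.span_mono[of S "insert b S"] by auto
    moreover have "dual_scale (f w') b \<in> D.span (insert b S)"
      by (intro D.span_scale D.span_base) auto
    ultimately have "f' + dual_scale (f w') b \<in> D.span (insert b S)" by (rule D.span_add)
    then show ?thesis by (simp add: f'_def)
  qed
qed

lemma part2:
  fixes scale :: "'k::field \<Rightarrow> 'v::ab_group_add \<Rightarrow> 'v" and W E' :: "'v set"
    and S0 :: "('v \<Rightarrow> 'k) set"
  assumes VS: "vector_space scale"
    and Wsub: "module.subspace scale W" and Esub: "module.subspace scale E'"
    and sumU: "{x + y |x y. x \<in> W \<and> y \<in> E'} = UNIV"
    and cap: "W \<inter> E' = {0}"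
    and S0fin: "finite S0" and annS0: "annih scale W \<subseteq> module.span dual_scale S0"
  shows "fin_dim scale E' \<and> vector_space.dim dual_scale (annih scale W) = vector_space.dim scale E'"
proof -
  interpret D: vector_space "dual_scale :: 'k \<Rightarrow> ('v \<Rightarrow> 'k) \<Rightarrow> _" by (rule vs_dual)
  interpret V: vector_space scale by (rule VS)
  have ex: "\<exists>e. e \<in> E' \<and> x - e \<in> W" for x
  proof -
    from sumU obtain w e where "x = w + e" "w \<in> W" "e \<in> E'" by blast
    then show ?thesis by (intro exI[of _ e]) auto
  qed
  have uq: "e1 = e2" if "e1 \<in> E'" "x - e1 \<in> W" "e2 \<in> E'" "x - e2 \<in> W" for x e1 e2
  proof -
    have "(x - e1) - (x - e2) \<in> W" using that Wsub V.subspace_diff by blast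
    moreover have "(x - e1) - (x - e2) = e2 - e1" by simp
    moreover have "e2 - e1 \<in> E'" using that Esub V.subspace_diff by blast
    ultimately have "e2 - e1 \<in> W \<inter> E'" by simp
    then have "e2 - e1 = 0" using cap by blast
    then show ?thesis by simp
  qed
  define P where "P x = (THE e. e \<in> E' \<and> x - e \<in> W)" for x
  have PE: "P x \<in> E'" and PW: "x - P x \<in> W" for x
  proof -
    have "P x \<in> E' \<and> x - P x \<in> W"
      unfolding P_def by (rule theI') (use ex uq in blast)
    then show "P x \<in> E'" "x - P x \<in> W" by auto
  qed
  have Peq: "P x = e" if "e \<in> E'" "x - e \<in> W" for x e
    using uq[OF PE PW that] .
  have Padd: "P (x + y) = P x + P y" for x y
  proof (rule Peq)
    show "P x + P y \<in> E'" using PE Esub V.subspace_add by blast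
    have "(x - P x) + (y - P y) \<in> W" using PW Wsub V.subspace_add by blast
    moreover have "(x - P x) + (y - P y) = (x + y) - (P x + P y)" by (simp add: algebra_simps)
    ultimately show "(x + y) - (P x + P y) \<in> W" by simp
  qed
  have Pscale: "P (scale c x) = scale c (P x)" for c x
  proof (rule Peq)
    show "scale c (P x) \<in> E'" using PE Esub V.subspace_scale by blast
    have "scale c (x - P x) \<in> W" using PW Wsub V.subspace_scale by blast
    then show "scale c x - scale c (P x) \<in> W" by (simp add: V.scale_right_diff_distrib)
  qed
  have PW0: "P w = 0" if "w \<in> W" for w
    by (rule Peq) (use that Esub V.subspace_0 in auto)
  have PEid: "P e = e" if "e \<in> E'" for e
    by (rule Peq) (use that Wsub V.subspace_0 in auto)
  obtain J where J: "J \<subseteq> E'" "V.independent J" "E' \<subseteq> V.span J"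
    using V.basis_exists[of E'] by metis
  have PJ: "P x \<in> V.span J" for x using PE J(3) by blast
  define \<phi> where "\<phi> j x = V.representation J (P x) j" for j x
  have \<phi>lin: "\<phi> j \<in> algdual scale" for j
    unfolding algdual_def \<phi>_def
    by (auto simp: Vector_Spaces.linear_iff VS vs_self Padd Pscale
        V.representation_add[OF J(2) PJ PJ] V.representation_scale[OF J(2) PJ])
  have \<phi>ann: "\<phi> j \<in> annih scale W" for j
    using \<phi>lin by (auto simp: annih_def \<phi>_def PW0 V.representation_zero)
  have \<phi>J: "\<phi> j k = (if k = j then 1 else 0)" if "k \<in> J" for j k
    using that J by (auto simp: \<phi>_def PEid V.representation_basis)
  have inj: "inj_on \<phi> J"
  proof (rule inj_onI)
    fix j k assume "j \<in> J" "k \<in> J" "\<phi> j = \<phi> k"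
    then have "\<phi> j j = \<phi> k j" by simp
    then show "j = k" using \<phi>J[OF \<open>j \<in> J\<close>] by (auto split: if_splits)
  qed
  have \<Phi>val: "v j = (if v = \<phi> j then 1 else 0)" if "v \<in> \<phi> ` J" "j \<in> J" for v j
  proof -
    from that obtain k where k: "k \<in> J" "v = \<phi> k" by auto
    show ?thesis using \<phi>J[OF \<open>j \<in> J\<close>, of k] inj k that by (auto dest: inj_onD)
  qed
  have indep: "D.independent (\<phi> ` J)"
    unfolding D.independent_explicit_finite_subsets
  proof (intro allI impI ballI)
    fix T u v
    assume T: "T \<subseteq> \<phi> ` J" "finite T" and s: "(\<Sum>v\<in>T. dual_scale (u v) v) = 0" and v: "v \<in> T"
    from v T obtain j where j: "j \<in> J" "v = \<phi> j" by auto
    have "(\<Sum>v\<in>T. dual_scale (u v) v) j = 0" using s by simp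
    then have "(\<Sum>w\<in>T. u w * w j) = 0" by (simp add: sum_fun_app dual_scale_app)
    moreover have "(\<Sum>w\<in>T. u w * w j) = (\<Sum>w\<in>T. if w = v then u w else 0)"
    proof (rule sum.cong)
      fix w assume "w \<in> T"
      then have "w \<in> \<phi> ` J" using T by blast
      then have "w j = (if w = \<phi> j then 1 else 0)" by (rule \<Phi>val) (rule j(1))
      then show "u w * w j = (if w = v then u w else 0)" using j by simp
    qed simp
    ultimately show "u v = 0" using T v by (simp add: sum.delta)
  qed
  have \<Phi>sub: "\<phi> ` J \<subseteq> annih scale W" using \<phi>ann by auto
  have "finite (\<phi> ` J)" using D.independent_span_bound[OF S0fin indep] \<Phi>sub annS0 by blast
  then have Jfin: "finite J" using inj finite_imageD by blast
  have spanJ: "V.span J = E'" using V.span_subspace[OF J(1) J(3) Esub] .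
  have annsp: "annih scale W \<subseteq> D.span (\<phi> ` J)"
  proof
    fix \<beta> assume b: "\<beta> \<in> annih scale W"
    then have bl: "Vector_Spaces.linear scale (*) \<beta>" and bW: "\<forall>w\<in>W. \<beta> w = 0"
      by (auto simp: annih_def algdual_def)
    have "\<beta> = (\<Sum>j\<in>J. dual_scale (\<beta> j) (\<phi> j))"
    proof
      fix x
      have "\<beta> x = \<beta> (x - P x) + \<beta> (P x)" using lin_add[OF bl, of "x - P x" "P x"] by simp
      also have "\<beta> (x - P x) = 0" using bW PW by blast
      also have "P x = (\<Sum>j\<in>J. scale (V.representation J (P x) j) j)"
        using V.sum_representation_eq[OF J(2) PJ Jfin order.refl] by simp
      also have "\<beta> (\<Sum>j\<in>J. scale (V.representation J (P x) j) j)
          = (\<Sum>j\<in>J. V.representation J (P x) j * \<beta> j)"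
      proof -
        interpret L: Vector_Spaces.linear scale "(*)" \<beta> by (rule bl)
        show ?thesis by (simp add: L.sum L.scale)
      qed
      finally show "\<beta> x = (\<Sum>j\<in>J. dual_scale (\<beta> j) (\<phi> j)) x"
        by (simp add: sum_fun_app dual_scale_app \<phi>_def mult.commute)
    qed
    also have "\<dots> \<in> D.span (\<phi> ` J)"
      by (intro D.span_sum D.span_scale D.span_base) auto
    finally show "\<beta> \<in> D.span (\<phi> ` J)" .
  qed
  have "card (\<phi> ` J) = D.dim (annih scale W)"
    by (rule D.basis_card_eq_dim[OF \<Phi>sub annsp indep])
  moreover have "card J = V.dim E'"
    by (rule V.basis_card_eq_dim[OF J(1) J(3) J(2)])
  moreover have "card (\<phi> ` J) = card J" using inj by (rule card_image)
  moreover have "fin_dim scale E'" unfolding fin_dim_def using Jfin spanJ by blast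
  ultimately show ?thesis by simp
qed


theorem proposition1:
  fixes scale :: "'k::field \<Rightarrow> 'v::ab_group_add \<Rightarrow> 'v"
    and T G :: "'v \<Rightarrow> 'v"
    and B :: "('v \<Rightarrow> 'k) set"
    and E :: "'v set"
  assumes VS: "vector_space scale"
    and T_lin: "Vector_Spaces.linear scale scale T" and T_surj: "surj T"
    and B_dual: "B \<subseteq> algdual scale"
    and B_sub: "module.subspace dual_scale B"
    and B_fin: "fin_dim dual_scale B"
    and E_sub: "module.subspace scale E"
    and G_lin: "Vector_Spaces.linear scale scale G"
    and G_rinv: "\<forall>x. T (G x) = x"
  shows "annih scale (T ` preannih B)
           = (\<lambda>\<gamma>. \<gamma> \<circ> G) ` (B \<inter> annih scale {v. T v = 0})
         \<and> (\<forall>E'. module.subspace scale E'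
              \<and> {x + y |x y. x \<in> T ` preannih B \<and> y \<in> E'} = UNIV
              \<and> T ` preannih B \<inter> E' = {0}
          \<longrightarrow> fin_dim scale E'
              \<and> vector_space.dim dual_scale (annih scale (T ` preannih B))
                  = vector_space.dim scale E')"
proof -
  interpret D: vector_space "dual_scale :: 'k \<Rightarrow> ('v \<Rightarrow> 'k) \<Rightarrow> _" by (rule vs_dual)
  interpret V: vector_space scale by (rule VS)
  define W where "W = T ` preannih B"
  obtain S where S: "finite S" "D.span S = B" using B_fin unfolding fin_dim_def by blast
  have SB: "S \<subseteq> B" using S(2) D.span_superset by blast
  have Bl: "\<And>b. b \<in> B \<Longrightarrow> Vector_Spaces.linear scale (*) b" using B_dual by (auto simp: algdual_def)
  have pre: "v \<in> preannih B" if "\<forall>b\<in>S. b v = 0" for v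
  proof -
    have "b v = 0" if "b \<in> D.span S" for b
      using that
    proof (induction rule: D.span_induct)
      case base
      show ?case by (rule D.subspaceI) (auto simp: dual_scale_app)
    next
      case (step x) then show ?case using \<open>\<forall>b\<in>S. b v = 0\<close> by simp
    qed
    then show ?thesis using S(2) by (auto simp: preannih_def)
  qed
  have part1: "annih scale W = (\<lambda>\<gamma>. \<gamma> \<circ> G) ` (B \<inter> annih scale {v. T v = 0})"
  proof
    show "annih scale W \<subseteq> (\<lambda>\<gamma>. \<gamma> \<circ> G) ` (B \<inter> annih scale {v. T v = 0})"
    proof
      fix \<beta> assume b: "\<beta> \<in> annih scale W"
      then have bl: "Vector_Spaces.linear scale (*) \<beta>" and bW: "\<forall>w\<in>W. \<beta> w = 0"
        by (auto simp: annih_def algdual_def)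
      have gl: "\<beta> \<circ> T \<in> algdual scale"
        unfolding algdual_def using Vector_Spaces.linear_compose[OF T_lin bl] by simp
      have "\<beta> \<circ> T \<in> D.span S"
      proof (rule key[OF VS S(1)])
        show "S \<subseteq> algdual scale" using SB B_dual by blast
        show "\<beta> \<circ> T \<in> algdual scale" by (rule gl)
        show "\<forall>v. (\<forall>b\<in>S. b v = 0) \<longrightarrow> (\<beta> \<circ> T) v = 0"
          using pre bW by (auto simp: W_def)
      qed
      then have "\<beta> \<circ> T \<in> B" using S(2) by simp
      moreover have "\<beta> \<circ> T \<in> annih scale {v. T v = 0}"
        using gl lin_zero[OF bl] by (auto simp: annih_def)
      moreover have "\<beta> = (\<beta> \<circ> T) \<circ> G" using G_rinv by (auto simp: fun_eq_iff)
      ultimately show "\<beta> \<in> (\<lambda>\<gamma>. \<gamma> \<circ> G) ` (B \<inter> annih scale {v. T v = 0})" by blast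
    qed
  next
    show "(\<lambda>\<gamma>. \<gamma> \<circ> G) ` (B \<inter> annih scale {v. T v = 0}) \<subseteq> annih scale W"
    proof
      fix \<beta> assume "\<beta> \<in> (\<lambda>\<gamma>. \<gamma> \<circ> G) ` (B \<inter> annih scale {v. T v = 0})"
      then obtain \<gamma> where g: "\<gamma> \<in> B" "\<gamma> \<in> annih scale {v. T v = 0}" and bg: "\<beta> = \<gamma> \<circ> G" by blast
      have gl: "Vector_Spaces.linear scale (*) \<gamma>" using Bl g(1) .
      have "\<beta> \<in> algdual scale"
        unfolding algdual_def bg using Vector_Spaces.linear_compose[OF G_lin gl] by simp
      moreover have "\<beta> u = 0" if "u \<in> W" for u
      proof -
        from that obtain v where v: "v \<in> preannih B" "u = T v" by (auto simp: W_def)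
        have "T (G (T v) - v) = 0" using G_rinv lin_diff[OF T_lin] by simp
        then have "\<gamma> (G (T v) - v) = 0" using g(2) by (auto simp: annih_def)
        moreover have "\<gamma> v = 0" using v g(1) by (auto simp: preannih_def)
        ultimately show ?thesis using lin_diff[OF gl, of "G (T v)" v] by (simp add: bg v)
      qed
      ultimately show "\<beta> \<in> annih scale W" by (auto simp: annih_def)
    qed
  qed
  have Wsub: "V.subspace W"
  proof (rule V.subspaceI)
    have "0 \<in> preannih B" using Bl lin_zero by (auto simp: preannih_def)
    moreover have "0 = T 0" by (simp add: lin_zero[OF T_lin])
    ultimately show "0 \<in> W" unfolding W_def by blast
  next
    fix x y assume "x \<in> W" "y \<in> W"
    then obtain a b where ab: "a \<in> preannih B" "b \<in> preannih B" "x = T a" "y = T b" by (auto simp: W_def)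
    have "a + b \<in> preannih B" using ab by (auto simp: preannih_def lin_add[OF Bl])
    moreover have "x + y = T (a + b)" by (simp add: ab lin_add[OF T_lin])
    ultimately show "x + y \<in> W" unfolding W_def by blast
  next
    fix c x assume "x \<in> W"
    then obtain a where a: "a \<in> preannih B" "x = T a" by (auto simp: W_def)
    have "scale c a \<in> preannih B" using a by (auto simp: preannih_def lin_scale[OF Bl])
    moreover have "scale c x = T (scale c a)" by (simp add: a lin_scale[OF T_lin])
    ultimately show "scale c x \<in> W" unfolding W_def by blast
  qed
  define C where "C \<gamma> = \<gamma> \<circ> G" for \<gamma> :: "'v \<Rightarrow> 'k"
  have Cspan: "C \<gamma> \<in> D.span (C ` S)" if "\<gamma> \<in> D.span S" for \<gamma>
    using that
  proof (induction rule: D.span_induct)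
    case base
    show ?case
    proof (rule D.subspaceI)
      show "0 \<in> {\<gamma>. C \<gamma> \<in> D.span (C ` S)}"
        using D.span_zero by (auto simp: C_def fun_eq_iff comp_def zero_fun_def)
    next
      fix x y assume "x \<in> {\<gamma>. C \<gamma> \<in> D.span (C ` S)}" "y \<in> {\<gamma>. C \<gamma> \<in> D.span (C ` S)}"
      then have "C x + C y \<in> D.span (C ` S)" using D.span_add by auto
      moreover have "C (x + y) = C x + C y" by (auto simp: C_def fun_eq_iff)
      ultimately show "x + y \<in> {\<gamma>. C \<gamma> \<in> D.span (C ` S)}" by simp
    next
      fix c x assume "x \<in> {\<gamma>. C \<gamma> \<in> D.span (C ` S)}"
      then have "dual_scale c (C x) \<in> D.span (C ` S)" using D.span_scale by auto
      moreover have "C (dual_scale c x) = dual_scale c (C x)" by (auto simp: C_def fun_eq_iff dual_scale_app)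
      ultimately show "dual_scale c x \<in> {\<gamma>. C \<gamma> \<in> D.span (C ` S)}" by simp
    qed
  next
    case (step x) then show ?case by (intro D.span_base) auto
  qed
  have annS0: "annih scale W \<subseteq> D.span (C ` S)"
    using part1 Cspan S(2) unfolding C_def by auto
  show ?thesis
    unfolding W_def[symmetric]
  proof (intro conjI allI impI)
    show "annih scale W = (\<lambda>\<gamma>. \<gamma> \<circ> G) ` (B \<inter> annih scale {v. T v = 0})" by (rule part1)
  next
    fix E' assume h: "V.subspace E' \<and> {x + y |x y. x \<in> W \<and> y \<in> E'} = UNIV \<and> W \<inter> E' = {0}"
    show "fin_dim scale E'" and "D.dim (annih scale W) = V.dim E'"
      using part2[OF VS Wsub _ _ _ _ annS0] h S(1) by auto
  qed
qed

end
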